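(* Let $G$ be an additive subgroup of $\mathbb{C}$ with $\mathrm{rank}\,G\ge 2$, and let $V$ be a nontrivial irreducible Harish-Chandra module over $\mathrm{Vir}[G]$. For any finite subset $I$ of $\mathrm{supp}V$ there is a subgroup $G_I$ of $G$ such that: (a) $G_I\cong\mathbb{Z}^k$ for some $k\in\mathbb{N}$; (b) $U(G_I)V_\mu=U(G_I)V_{\mu'}$ and $\mu-\mu'\in G_I$ for all $\mu,\mu'\in I$; (c) $V_\mu$ is an irreducible $U(G_I)_0$-module for every $\mu\in I$.
   Context: $\mathbb{N}$ denotes the positive integers. For a nonzero additive subgroup $G$ of $\mathbb{C}$, $\mathrm{Vir}[G]$ is the complex Lie algebra with basis $\{C,d_x:x\in G\}$ and brackets $[d_x,d_y]=(y-x)d_{x+y}+\delta_{x,-y}\frac{x^3-x}{12}C$, $[C,d_x]=0$; for a subgroup $H\subseteq G$, $\mathrm{Vir}[H]$ is the subalgebra spanned by $C$ and $d_x$, $x\in H$. $U(H)$ denotes the universal enveloping algebra of $\mathrm{Vir}[H]$, and for $a\in\mathbb{C}$, $U(H)_a=\{y\in U(H):[d_0,y]=ay\}$. The rank of a subgroup $A$ of $\mathbb{C}$ is the maximal $r$ such that there exist nonzero $g_1,\dots,g_r\in A$ with $\mathbb{Z}g_1+\dots+\mathbb{Z}g_r$ a direct sum ($\infty$ if no maximum exists). For a module $V$ on which $C$ acts as a scalar, $V_\lambda=\{v:d_0v=\lambda v\}$; $V$ is a weight module if it is the sum of its weight spaces, and Harish-Chandra if moreover all weight spaces are finite-dimensional;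 $\mathrm{supp}V=\{\lambda:V_\lambda\ne0\}$. $V$ is trivial if $\mathrm{Vir}[G]V=0$. *)

theory Defs
  imports Main "HOL.Complex"
begin

definition add_subgroup :: "complex set \<Rightarrow> bool" where
  "add_subgroup G \<longleftrightarrow> 0 \<in> G \<and> (\<forall>x\<in>G. \<forall>y\<in>G. x + y \<in> G) \<and> (\<forall>x\<in>G. - x \<in> G)"

definition rank_ge :: "complex set \<Rightarrow> nat \<Rightarrow> bool" where
  "rank_ge A r \<longleftrightarrow> (\<exists>g :: nat \<Rightarrow> complex. (\<forall>i<r. g i \<in> A \<and> g i \<noteq> 0) \<and>
     (\<forall>n :: nat \<Rightarrow> int. (\<Sum>i<r. of_int (n i) * g i) = 0 \<longrightarrow> (\<forall>i<r. of_int (n i) * g i = 0)))"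

definition iso_Zk :: "complex set \<Rightarrow> nat \<Rightarrow> bool" where
  "iso_Zk H k \<longleftrightarrow> (\<exists>g :: nat \<Rightarrow> complex.
     (\<forall>n :: nat \<Rightarrow> int. (\<Sum>i<k. of_int (n i) * g i) = 0 \<longrightarrow> (\<forall>i<k. n i = 0)) \<and>
     H = range (\<lambda>n :: nat \<Rightarrow> int. \<Sum>i<k. of_int (n i) * g i))"

text \<open>A Vir[G]-module on which C acts as the scalar c: a complex vector space (scalar
  multiplication scale), with linear operators d x (x in G) satisfying the Virasoro relations.\<close>
definition vir_module ::
  "complex set \<Rightarrow> (complex \<Rightarrow> 'v::ab_group_add \<Rightarrow> 'v) \<Rightarrow> (complex \<Rightarrow> 'v \<Rightarrow> 'v) \<Rightarrow> complex \<Rightarrow> bool" where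
  "vir_module G scale d c \<longleftrightarrow> vector_space scale \<and>
     (\<forall>x\<in>G. Vector_Spaces.linear scale scale (d x)) \<and>
     (\<forall>x\<in>G. \<forall>y\<in>G. \<forall>v. d x (d y v) - d y (d x v) =
        scale (y - x) (d (x + y) v) + (if x = - y then scale ((x ^ 3 - x) / 12 * c) v else 0))"

definition weight_space :: "(complex \<Rightarrow> 'v \<Rightarrow> 'v) \<Rightarrow> (complex \<Rightarrow> 'v \<Rightarrow> 'v) \<Rightarrow> complex \<Rightarrow> 'v set" where
  "weight_space scale d lam = {v. d 0 v = scale lam v}"

definition supp :: "(complex \<Rightarrow> 'v::zero \<Rightarrow> 'v) \<Rightarrow> (complex \<Rightarrow> 'v \<Rightarrow> 'v) \<Rightarrow> complex set" where
  "supp scale d = {lam. weight_space scale d lam \<noteq> {0}}"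

definition weight_module :: "(complex \<Rightarrow> 'v::ab_group_add \<Rightarrow> 'v) \<Rightarrow> (complex \<Rightarrow> 'v \<Rightarrow> 'v) \<Rightarrow> bool" where
  "weight_module scale d \<longleftrightarrow> (\<forall>v. v \<in> module.span scale (\<Union>lam. weight_space scale d lam))"

definition harish_chandra :: "(complex \<Rightarrow> 'v::ab_group_add \<Rightarrow> 'v) \<Rightarrow> (complex \<Rightarrow> 'v \<Rightarrow> 'v) \<Rightarrow> bool" where
  "harish_chandra scale d \<longleftrightarrow> weight_module scale d \<and>
     (\<forall>lam. \<exists>B. finite B \<and> B \<subseteq> weight_space scale d lam \<and> module.span scale B = weight_space scale d lam)"

text \<open>Irreducible: the only Vir[G]-submodules are 0 and V (C acts as a scalar, so
  submodules are exactly the subspaces stable under all d_x).\<close>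
definition vir_irreducible :: "complex set \<Rightarrow> (complex \<Rightarrow> 'v::ab_group_add \<Rightarrow> 'v) \<Rightarrow> (complex \<Rightarrow> 'v \<Rightarrow> 'v) \<Rightarrow> bool" where
  "vir_irreducible G scale d \<longleftrightarrow> (\<forall>W. module.subspace scale W \<longrightarrow> (\<forall>x\<in>G. \<forall>w\<in>W. d x w \<in> W) \<longrightarrow>
       W = {0} \<or> W = UNIV)"

definition vir_trivial :: "complex set \<Rightarrow> (complex \<Rightarrow> 'v::ab_group_add \<Rightarrow> 'v) \<Rightarrow> (complex \<Rightarrow> 'v \<Rightarrow> 'v) \<Rightarrow> complex \<Rightarrow> bool" where
  "vir_trivial G scale d c \<longleftrightarrow> (\<forall>x\<in>G. \<forall>v. d x v = 0) \<and> (\<forall>v. scale c v = 0)"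

definition word_op :: "(complex \<Rightarrow> 'v \<Rightarrow> 'v) \<Rightarrow> complex list \<Rightarrow> 'v \<Rightarrow> 'v" where
  "word_op d xs v = foldr d xs v"

text \<open>U(H) V_mu: the image of U(H) (spanned by monomials in the d_x, x in H; C acts as a scalar)
  applied to V_mu.\<close>
definition U_apply :: "(complex \<Rightarrow> 'v::ab_group_add \<Rightarrow> 'v) \<Rightarrow> (complex \<Rightarrow> 'v \<Rightarrow> 'v) \<Rightarrow> complex set \<Rightarrow> complex \<Rightarrow> 'v set" where
  "U_apply scale d H \<mu> = module.span scale
     {word_op d xs v | xs v. set xs \<subseteq> H \<and> v \<in> weight_space scale d \<mu>}"

text \<open>U(H)_0 is spanned by the monomials
  d_{x_1}...d_{x_n} (times powers of C, a scalar) with x_1+...+x_n = 0, so a subspace of V_mu is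
  a U(H)_0-submodule iff it is stable under these monomials.\<close>
definition U0_irreducible :: "(complex \<Rightarrow> 'v::ab_group_add \<Rightarrow> 'v) \<Rightarrow> (complex \<Rightarrow> 'v \<Rightarrow> 'v) \<Rightarrow> complex set \<Rightarrow> complex \<Rightarrow> bool" where
  "U0_irreducible scale d H \<mu> \<longleftrightarrow> weight_space scale d \<mu> \<noteq> {0} \<and>
     (\<forall>W. module.subspace scale W \<longrightarrow> W \<subseteq> weight_space scale d \<mu> \<longrightarrow>
        (\<forall>xs. set xs \<subseteq> H \<longrightarrow> sum_list xs = 0 \<longrightarrow> (\<forall>w\<in>W. word_op d xs w \<in> W)) \<longrightarrow>
        W = {0} \<or> W = weight_space scale d \<mu>)"

end

theory Submission imports Defs "HOL-Library.Function_Algebras" begin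


definition zspan :: "(nat \<Rightarrow> complex) \<Rightarrow> nat \<Rightarrow> complex set" where
  "zspan e k = range (\<lambda>n::nat\<Rightarrow>int. \<Sum>i<k. of_int (n i) * e i)"

definition indep :: "(nat \<Rightarrow> complex) \<Rightarrow> nat \<Rightarrow> bool" where
  "indep e k \<longleftrightarrow> (\<forall>n::nat\<Rightarrow>int. (\<Sum>i<k. of_int (n i) * e i) = 0 \<longrightarrow> (\<forall>i<k. n i = 0))"

lemma iso_Zk_iff: "iso_Zk H k \<longleftrightarrow> (\<exists>g. indep g k \<and> H = zspan g k)"
  unfolding iso_Zk_def indep_def zspan_def by blast

lemma zspan_sub: "add_subgroup (zspan e k)"
  unfolding add_subgroup_def zspan_def
proof (intro conjI ballI)
  show "0 \<in> range (\<lambda>n::nat\<Rightarrow>int. \<Sum>i<k. of_int (n i) * e i)"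
    by (rule image_eqI[of _ _ "\<lambda>_. 0"]) auto
next
  fix x y assume "x \<in> range (\<lambda>n::nat\<Rightarrow>int. \<Sum>i<k. of_int (n i) * e i)"
    "y \<in> range (\<lambda>n::nat\<Rightarrow>int. \<Sum>i<k. of_int (n i) * e i)"
  then obtain n m where "x = (\<Sum>i<k. of_int (n i) * e i)" "y = (\<Sum>i<k. of_int (m i) * e i)" by auto
  then show "x + y \<in> range (\<lambda>n::nat\<Rightarrow>int. \<Sum>i<k. of_int (n i) * e i)"
    by (intro image_eqI[of _ _ "\<lambda>i. n i + m i"]) (auto simp: sum.distrib distrib_right)
next
  fix x assume "x \<in> range (\<lambda>n::nat\<Rightarrow>int. \<Sum>i<k. of_int (n i) * e i)"
  then obtain n where "x = (\<Sum>i<k. of_int (n i) * e i)" by auto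
  then show "- x \<in> range (\<lambda>n::nat\<Rightarrow>int. \<Sum>i<k. of_int (n i) * e i)"
    by (intro image_eqI[of _ _ "\<lambda>i. - n i"]) (auto simp: sum_negf)
qed

lemma sub_nat_mult: "add_subgroup H \<Longrightarrow> x \<in> H \<Longrightarrow> of_nat m * x \<in> H"
  by (induction m) (auto simp: add_subgroup_def distrib_right)

lemma sub_int_mult: "add_subgroup H \<Longrightarrow> x \<in> H \<Longrightarrow> of_int m * x \<in> H"
proof (cases "m \<ge> 0")
  case True
  assume a: "add_subgroup H" "x \<in> H"
  have "(of_int m::complex) = of_nat (nat m)" using True by (simp add: of_nat_nat)
  then show ?thesis using sub_nat_mult[OF a] by simp
next
  case False
  assume a: "add_subgroup H" "x \<in> H"
  have "(of_int m::complex) * x = - (of_nat (nat (-m)) * x)" using False by (simp add: of_nat_nat)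
  then show ?thesis using sub_nat_mult[OF a, of "nat (-m)"] a(1) by (simp add: add_subgroup_def)
qed

lemma sub_sum: "add_subgroup H \<Longrightarrow> (\<And>i. i \<in> A \<Longrightarrow> f i \<in> H) \<Longrightarrow> sum f A \<in> H"
  by (induction A rule: infinite_finite_induct) (auto simp: add_subgroup_def)

lemma indep_Suc: "indep e (Suc k) \<Longrightarrow> indep e k"
  unfolding indep_def
proof (intro allI impI)
  fix n :: "nat \<Rightarrow> int" and i
  assume a: "\<forall>n::nat\<Rightarrow>int. (\<Sum>i<Suc k. of_int (n i) * e i) = 0 \<longrightarrow> (\<forall>i<Suc k. n i = 0)"
    and s: "(\<Sum>i<k. of_int (n i) * e i) = 0" and i: "i < k"
  have "(\<Sum>i<Suc k. of_int ((n(k:=0)) i) * e i) = (\<Sum>i<k. of_int (n i) * e i)"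
    by (simp add: sum.lessThan_Suc)
  then have "\<forall>i<Suc k. (n(k:=0)) i = 0" using a s by metis
  then show "n i = 0" using i by (metis fun_upd_other less_SucI nat_neq_iff)
qed

lemma zspan0: "zspan e 0 = {0}"
  unfolding zspan_def by auto

lemma in_zspan_base: "i < k \<Longrightarrow> e i \<in> zspan e k"
  unfolding zspan_def
proof (rule image_eqI[of _ _ "\<lambda>l. if l = i then 1 else 0"])
  assume "i < k"
  have "(\<lambda>l. of_int (if l = i then 1 else 0::int) * e l) = (\<lambda>l. if l = i then e l else 0)" by auto
  then have "(\<Sum>l<k. of_int (if l = i then 1 else 0::int) * e l) = (\<Sum>l<k. if l = i then e l else 0)"
    by metis
  also have "\<dots> = e i" using \<open>i < k\<close> by (subst sum.delta) auto
  finally show "e i = (\<Sum>l<k. of_int (if l = i then 1 else 0::int) * e l)" by simp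
qed simp


lemma sum_upd_below: "(\<Sum>i<(j::nat). of_int (p i) * (f(j:=h)) i) = (\<Sum>i<j. of_int (p i) * f i)"
  by (rule sum.cong[OF refl]) (auto dest: less_imp_neq)

lemma free_sub:
  assumes "indep e k" "add_subgroup H" "H \<subseteq> zspan e k"
  shows "\<exists>f j. indep f j \<and> H = zspan f j"
  using assms
proof (induction k arbitrary: H)
  case 0
  then have "H = {0}" using zspan0[of e] by (auto simp: add_subgroup_def)
  then show ?case using zspan0[of e] by (intro exI[of _ e] exI[of _ 0]) (auto simp: indep_def)
next
  case (Suc k)
  have ik: "indep e k" using Suc.prems(1) by (rule indep_Suc)
  have sH: "add_subgroup H" by fact
  define D where "D = {n k | n. (\<Sum>i<Suc k. of_int (n i) * e i) \<in> H}"
  have rep: "\<exists>n. x = (\<Sum>i<Suc k. of_int (n i) * e i)" if "x \<in> H" for x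
    using Suc.prems(3) that unfolding zspan_def by auto
  show ?case
  proof (cases "D \<subseteq> {0}")
    case True
    have "H \<subseteq> zspan e k"
    proof
      fix x assume "x \<in> H"
      then obtain n where n: "x = (\<Sum>i<Suc k. of_int (n i) * e i)" using rep by blast
      then have "n k \<in> D" using \<open>x \<in> H\<close> unfolding D_def by blast
      then have "n k = 0" using True by auto
      then have "x = (\<Sum>i<k. of_int (n i) * e i)" using n by simp
      then show "x \<in> zspan e k" unfolding zspan_def by auto
    qed
    then show ?thesis using Suc.IH[OF ik sH] by blast
  next
    case False
    then obtain a where a: "a \<in> D" "a \<noteq> 0" by auto
    then obtain na where na: "(\<Sum>i<Suc k. of_int (na i) * e i) \<in> H" "na k = a" unfolding D_def by auto
    have "\<exists>p::nat. p > 0 \<and> int p \<in> D"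
    proof (cases "a > 0")
      case True then show ?thesis using a by (intro exI[of _ "nat a"]) auto
    next
      case False
      have "- (\<Sum>i<Suc k. of_int (na i) * e i) \<in> H" using na sH by (auto simp: add_subgroup_def)
      moreover have "- (\<Sum>i<Suc k. of_int (na i) * e i) = (\<Sum>i<Suc k. of_int (- na i) * e i)"
        by (simp add: sum_negf)
      ultimately have "-a \<in> D" unfolding D_def using na(2) by (intro CollectI exI[of _ "\<lambda>i. - na i"]) auto
      then show ?thesis using False a by (intro exI[of _ "nat (-a)"]) auto
    qed
    define dn where "dn = (LEAST p::nat. p > 0 \<and> int p \<in> D)"
    have dn: "dn > 0" "int dn \<in> D" using LeastI_ex[OF \<open>\<exists>p::nat. p > 0 \<and> int p \<in> D\<close>] unfolding dn_def by auto
    have dmin: "\<And>p::nat. p > 0 \<Longrightarrow> int p \<in> D \<Longrightarrow> dn \<le> p" unfolding dn_def by (rule Least_le) auto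
    obtain n0 where n0': "int dn = n0 k" "(\<Sum>i<Suc k. of_int (n0 i) * e i) \<in> H"
      using dn(2) unfolding D_def mem_Collect_eq by blast
    have n0: "(\<Sum>i<Suc k. of_int (n0 i) * e i) \<in> H" "n0 k = int dn" using n0' by simp_all
    define h where "h = (\<Sum>i<Suc k. of_int (n0 i) * e i)"
    define H0 where "H0 = H \<inter> zspan e k"
    have sH0: "add_subgroup H0" using sH zspan_sub[of e k] unfolding H0_def add_subgroup_def by auto
    obtain f j where fj: "indep f j" "H0 = zspan f j" using Suc.IH[OF ik sH0] unfolding H0_def by blast
    define f' where "f' = f(j:=h)"
    have sumf': "(\<Sum>i<Suc j. of_int (p i) * f' i) = (\<Sum>i<j. of_int (p i) * f i) + of_int (p j) * h" for p
      unfolding f'_def by (simp add: sum_upd_below)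
    have indS: "\<And>n. (\<Sum>i<Suc k. of_int (n i) * e i) = 0 \<Longrightarrow> \<forall>i<Suc k. n i = 0"
      using Suc.prems(1) unfolding indep_def by blast
    have indep': "indep f' (Suc j)"
      unfolding indep_def
    proof (intro allI impI)
      fix p :: "nat \<Rightarrow> int" and i assume p0: "(\<Sum>i<Suc j. of_int (p i) * f' i) = 0" and i: "i < Suc j"
      define y where "y = (\<Sum>i<j. of_int (p i) * f i)"
      have y0: "y + of_int (p j) * h = 0" using p0 sumf'[of p] unfolding y_def by simp
      have "y \<in> H0" unfolding fj(2) zspan_def y_def by auto
      then obtain q where q: "y = (\<Sum>i<k. of_int (q i) * e i)" unfolding H0_def zspan_def by auto
      have qA: "(\<Sum>i<Suc k. of_int ((q(k:=0)) i) * e i) = y"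
      proof -
        have "(\<Sum>i<Suc k. of_int ((q(k:=0)) i) * e i) = (\<Sum>i<k. of_int ((q(k:=0)) i) * e i) + of_int ((q(k:=0)) k) * e k"
          by (rule sum.lessThan_Suc)
        also have "\<dots> = (\<Sum>i<k. of_int ((q(k:=0)) i) * e i)" by simp
        also have "\<dots> = (\<Sum>i<k. of_int (q i) * e i)" by (rule sum.cong) auto
        finally show ?thesis using q by simp
      qed
      have "(\<Sum>i<Suc k. of_int ((q(k:=0)) i + p j * n0 i) * e i)
          = (\<Sum>i<Suc k. of_int ((q(k:=0)) i) * e i) + of_int (p j) * (\<Sum>i<Suc k. of_int (n0 i) * e i)"
        by (simp only: of_int_add of_int_mult distrib_right sum.distrib sum_distrib_left mult.assoc)
      also have "\<dots> = y + of_int (p j) * h" using qA h_def by simp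
      also have "\<dots> = 0" by (rule y0)
      finally have "\<forall>i<Suc k. (q(k:=0)) i + p j * n0 i = 0" by (rule indS)
      then have "p j * int dn = 0" using n0(2) by auto
      then have pj: "p j = 0" using dn(1) by simp
      then have "y = 0" using y0 by simp
      then have "\<forall>i<j. p i = 0" using fj(1) unfolding indep_def y_def by blast
      then show "p i = 0" using pj i using less_Suc_eq by auto
    qed
    have "H = zspan f' (Suc j)"
    proof
      show "H \<subseteq> zspan f' (Suc j)"
      proof
        fix x assume xH: "x \<in> H"
        then obtain n where n: "x = (\<Sum>i<Suc k. of_int (n i) * e i)" using rep by blast
        define q where "q = n k div int dn"
        define r where "r = n k mod int dn"
        have r: "0 \<le> r" "r < int dn" "n k = q * int dn + r" using dn(1) unfolding q_def r_def by auto
        have hH: "h \<in> H" using n0 h_def by simp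
        have "x - of_int q * h \<in> H" using xH sub_int_mult[OF sH hH, of q] sH
          by (metis add_subgroup_def diff_conv_add_uminus)
        moreover have xq: "x - of_int q * h = (\<Sum>i<Suc k. of_int (n i - q * n0 i) * e i)"
          by (simp add: n h_def sum_subtractf sum_distrib_left left_diff_distrib mult.assoc del: sum.lessThan_Suc)
        ultimately have "n k - q * n0 k \<in> D" unfolding D_def by auto
        then have "r \<in> D" using r n0(2) by (simp add: algebra_simps)
        have "r = 0"
        proof (rule ccontr)
          assume "r \<noteq> 0"
          then have "nat r > 0" "int (nat r) \<in> D" using r \<open>r \<in> D\<close> by auto
          then have "dn \<le> nat r" by (rule dmin)
          then show False using r by linarith
        qed
        then have "n k - q * n0 k = 0" using r n0(2) by (simp add: algebra_simps)
        then have "x - of_int q * h = (\<Sum>i<k. of_int (n i - q * n0 i) * e i)" using xq by simp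
        then have "x - of_int q * h \<in> zspan e k" unfolding zspan_def
          by (rule image_eqI[of _ _ "\<lambda>i. n i - q * n0 i"]) (simp_all del: of_int_diff of_int_mult)
        then have "x - of_int q * h \<in> H0" unfolding H0_def using \<open>x - of_int q * h \<in> H\<close> by auto
        then obtain p where p: "x - of_int q * h = (\<Sum>i<j. of_int (p i) * f i)" unfolding fj(2) zspan_def by auto
        have "(\<Sum>i<Suc j. of_int ((p(j:=q)) i) * f' i) = (\<Sum>i<j. of_int ((p(j:=q)) i) * f i) + of_int ((p(j:=q)) j) * h"
          by (rule sumf')
        also have "\<dots> = (\<Sum>i<j. of_int (p i) * f i) + of_int q * h"
        proof -
          have "(\<Sum>i<j. of_int ((p(j:=q)) i) * f i) = (\<Sum>i<j. of_int (p i) * f i)" by (rule sum.cong) auto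
          then show ?thesis by simp
        qed
        finally have "x = (\<Sum>i<Suc j. of_int ((p(j:=q)) i) * f' i)"
          using p by (simp add: algebra_simps)
        then show "x \<in> zspan f' (Suc j)" unfolding zspan_def by (rule image_eqI[of _ _ "p(j:=q)"]) simp
      qed
    next
      have fH: "f' i \<in> H" if "i < Suc j" for i
      proof (cases "i = j")
        case True then show ?thesis using n0 unfolding f'_def h_def by simp
      next
        case False
        then have "f i \<in> H0" using that fj(2) in_zspan_base[of i j f] by auto
        then show ?thesis using False unfolding f'_def H0_def by auto
      qed
      show "zspan f' (Suc j) \<subseteq> H"
      proof
        fix z assume "z \<in> zspan f' (Suc j)"
        then obtain p where zp: "z = (\<Sum>i<Suc j. of_int (p i) * f' i)" unfolding zspan_def by blast
        have "of_int (p i) * f' i \<in> H" if "i \<in> {..<Suc j}" for i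
          using that by (simp only: lessThan_iff) (rule sub_int_mult[OF sH fH])
        then have "(\<Sum>i<Suc j. of_int (p i) * f' i) \<in> H" by (rule sub_sum[OF sH])
        then show "z \<in> H" using zp by simp
      qed
    qed
    then show ?thesis using indep' by blast
  qed
qed


lemma embed_free:
  assumes "finite L"
  shows "\<exists>e k. indep e k \<and> L \<subseteq> zspan e k"
  using assms
proof (induction L rule: finite_induct)
  case empty
  then show ?case by (intro exI[of _ "\<lambda>_. 0"] exI[of _ 0]) (auto simp: indep_def)
next
  case (insert g L)
  then obtain e k where ek: "indep e k" "L \<subseteq> zspan e k" by blast
  show ?case
  proof (cases "indep (e(k:=g)) (Suc k)")
    case True
    have "zspan e k \<subseteq> zspan (e(k:=g)) (Suc k)"
    proof
      fix x assume "x \<in> zspan e k"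
      then obtain n where n: "x = (\<Sum>i<k. of_int (n i) * e i)" unfolding zspan_def by auto
      have "(\<Sum>i<Suc k. of_int ((n(k:=0)) i) * (e(k:=g)) i) =
          (\<Sum>i<k. of_int ((n(k:=0)) i) * (e(k:=g)) i) + of_int ((n(k:=0)) k) * (e(k:=g)) k"
        by (rule sum.lessThan_Suc)
      also have "\<dots> = (\<Sum>i<k. of_int ((n(k:=0)) i) * (e(k:=g)) i)" by simp
      also have "\<dots> = (\<Sum>i<k. of_int (n i) * e i)" by (rule sum.cong) auto
      finally have "x = (\<Sum>i<Suc k. of_int ((n(k:=0)) i) * (e(k:=g)) i)" using n by simp
      then show "x \<in> zspan (e(k:=g)) (Suc k)" unfolding zspan_def by (intro image_eqI[of _ _ "n(k:=0)"]) auto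
    qed
    moreover have "g \<in> zspan (e(k:=g)) (Suc k)" using in_zspan_base[of k "Suc k" "e(k:=g)"] by simp
    ultimately show ?thesis using True ek(2) by blast
  next
    case False
    then obtain n i where n: "(\<Sum>i<Suc k. of_int (n i) * (e(k:=g)) i) = 0" "i < Suc k" "n i \<noteq> 0"
      unfolding indep_def by blast
    have sn: "(\<Sum>i<k. of_int (n i) * e i) + of_int (n k) * g = 0"
    proof -
      have "(\<Sum>i<Suc k. of_int (n i) * (e(k:=g)) i) = (\<Sum>i<k. of_int (n i) * (e(k:=g)) i) + of_int (n k) * (e(k:=g)) k"
        by (rule sum.lessThan_Suc)
      also have "\<dots> = (\<Sum>i<k. of_int (n i) * e i) + of_int (n k) * g"
      proof -
        have "(\<Sum>i<k. of_int (n i) * (e(k:=g)) i) = (\<Sum>i<k. of_int (n i) * e i)" by (rule sum.cong) auto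
        then show ?thesis by simp
      qed
      finally show ?thesis using n(1) by simp
    qed
    have nk: "n k \<noteq> 0"
    proof
      assume "n k = 0"
      then have "(\<Sum>i<k. of_int (n i) * e i) = 0" using sn by simp
      then have "\<forall>i<k. n i = 0" using ek(1) unfolding indep_def by blast
      then show False using n(2,3) \<open>n k = 0\<close> less_Suc_eq by auto
    qed
    define m where "m = n k"
    define e' where "e' = (\<lambda>i. e i / of_int m)"
    have mC: "(of_int m :: complex) \<noteq> 0" using nk m_def by simp
    have conv: "(\<Sum>i<k. of_int (p i) * e i) = of_int m * (\<Sum>i<k. of_int (p i) * e' i)" for p
      unfolding e'_def sum_distrib_left using mC by (intro sum.cong) auto
    have "indep e' k" unfolding indep_def
    proof (rule allI, rule impI)
      fix p :: "nat \<Rightarrow> int" assume "(\<Sum>i<k. of_int (p i) * e' i) = 0"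
      then have "(\<Sum>i<k. of_int (p i) * e i) = 0" using conv by simp
      then show "\<forall>i<k. p i = 0" using ek(1) unfolding indep_def by blast
    qed
    moreover have "zspan e k \<subseteq> zspan e' k"
    proof
      fix x assume "x \<in> zspan e k"
      then obtain p where p: "x = (\<Sum>i<k. of_int (p i) * e i)" unfolding zspan_def by auto
      have "x = (\<Sum>i<k. of_int (m * p i) * e' i)"
        unfolding p conv sum_distrib_left by (simp add: mult.assoc)
      then show "x \<in> zspan e' k" unfolding zspan_def by (intro image_eqI[of _ _ "\<lambda>i. m * p i"]) auto
    qed
    moreover have "g \<in> zspan e' k"
    proof -
      have "of_int m * g = - (\<Sum>i<k. of_int (n i) * e i)" using sn m_def by (simp add: eq_neg_iff_add_eq_0 add.commute)
      also have "\<dots> = of_int m * (\<Sum>i<k. of_int (- n i) * e' i)" unfolding conv by (simp add: sum_negf)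
      finally have "g = (\<Sum>i<k. of_int (- n i) * e' i)" using mC by simp
      then show ?thesis unfolding zspan_def by (intro image_eqI[of _ _ "\<lambda>i. - n i"]) auto
    qed
    ultimately show ?thesis using ek(2) by blast
  qed
qed

inductive_set zsp :: "complex set \<Rightarrow> complex set" for L where
  zsp_base: "x \<in> L \<Longrightarrow> x \<in> zsp L"
| zsp_zero: "0 \<in> zsp L"
| zsp_add: "x \<in> zsp L \<Longrightarrow> y \<in> zsp L \<Longrightarrow> x + y \<in> zsp L"
| zsp_neg: "x \<in> zsp L \<Longrightarrow> - x \<in> zsp L"

lemma zsp_sub: "add_subgroup (zsp L)"
  unfolding add_subgroup_def by (auto intro: zsp.intros)

lemma zsp_least: assumes "add_subgroup S" "L \<subseteq> S" shows "zsp L \<subseteq> S"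
proof
  fix x assume "x \<in> zsp L"
  then show "x \<in> S" using assms by induction (auto simp: add_subgroup_def)
qed

lemma zsp_free:
  assumes "finite L" "g0 \<in> L" "g0 \<noteq> 0"
  shows "\<exists>k\<ge>1. iso_Zk (zsp L) k"
proof -
  obtain e k where "indep e k" "L \<subseteq> zspan e k" using embed_free[OF assms(1)] by blast
  then have "zsp L \<subseteq> zspan e k" using zsp_least zspan_sub by blast
  then obtain f j where fj: "indep f j" "zsp L = zspan f j" using free_sub[OF \<open>indep e k\<close> zsp_sub] by blast
  have "j \<noteq> 0"
  proof
    assume "j = 0"
    then have "zsp L = {0}" using fj zspan0 by simp
    then show False using assms zsp_base[of g0 L] by auto
  qed
  then show ?thesis using fj iso_Zk_iff by (metis less_one not_le)
qed




lemma word_nil[simp]: "word_op d [] v = v" by (simp add: word_op_def)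
lemma word_cons[simp]: "word_op d (x#xs) v = d x (word_op d xs v)" by (simp add: word_op_def)
lemma word_append: "word_op d (xs@ys) v = word_op d xs (word_op d ys v)" by (simp add: word_op_def)

lemma sum_fun_apply: "(sum f A) x = sum (\<lambda>a. f a x) A"
  by (induction A rule: infinite_finite_induct) auto

lemma sum_list_sub: "add_subgroup G \<Longrightarrow> set xs \<subseteq> G \<Longrightarrow> sum_list xs \<in> G"
  by (induction xs) (auto simp: add_subgroup_def)

locale vmod = vector_space scale for scale :: "complex \<Rightarrow> 'v::ab_group_add \<Rightarrow> 'v" +
  fixes G :: "complex set" and d :: "complex \<Rightarrow> 'v \<Rightarrow> 'v"
  assumes Gsub: "add_subgroup G"
  and lin: "x \<in> G \<Longrightarrow> Vector_Spaces.linear scale scale (d x)"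
  and comm0: "y \<in> G \<Longrightarrow> d 0 (d y v) - d y (d 0 v) = scale y (d y v)"
  and irr: "vir_irreducible G scale d"
begin

abbreviation wt where "wt \<equiv> weight_space scale d"

lemma G0: "0 \<in> G" using Gsub by (simp add: add_subgroup_def)

lemma word_lin: "set xs \<subseteq> G \<Longrightarrow> Vector_Spaces.linear scale scale (word_op d xs)"
proof (induction xs)
  case Nil
  have "word_op d [] = (\<lambda>a. a)" by (auto simp: word_op_def)
  then show ?case using linear_ident by simp
next
  case (Cons x xs)
  have "word_op d (x#xs) = d x \<circ> word_op d xs" by (auto simp: word_op_def)
  moreover have "Vector_Spaces.linear scale scale (d x \<circ> word_op d xs)"
    using Vector_Spaces.linear_compose[OF Cons.IH lin] Cons.prems by auto
  ultimately show ?case by (simp only:)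
qed

lemma word_add: assumes "set xs \<subseteq> G" shows "word_op d xs (u + v) = word_op d xs u + word_op d xs v"
proof -
  interpret l: Vector_Spaces.linear scale scale "word_op d xs" using word_lin[OF assms] .
  show ?thesis by (rule l.add)
qed
lemma word_scale: assumes "set xs \<subseteq> G" shows "word_op d xs (scale a u) = scale a (word_op d xs u)"
proof -
  interpret l: Vector_Spaces.linear scale scale "word_op d xs" using word_lin[OF assms] .
  show ?thesis by (rule l.scale)
qed

lemma wt_subspace: "subspace (wt lam)"
proof -
  interpret l: Vector_Spaces.linear scale scale "d 0" using lin[OF G0] .
  show ?thesis unfolding weight_space_def
    by (intro subspaceI) (auto simp: l.add l.scale scale_right_distrib scale_left_commute)
qed

lemma d_wt: "y \<in> G \<Longrightarrow> v \<in> wt lam \<Longrightarrow> d y v \<in> wt (lam + y)"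
proof -
  assume y: "y \<in> G" and v: "v \<in> wt lam"
  interpret l: Vector_Spaces.linear scale scale "d y" using lin[OF y] .
  have "d 0 (d y v) = d y (d 0 v) + scale y (d y v)" using comm0[OF y, of v] by (simp add: algebra_simps)
  also have "\<dots> = scale (lam + y) (d y v)" using v by (simp add: weight_space_def l.scale scale_left_distrib)
  finally show ?thesis by (simp add: weight_space_def)
qed

lemma word_wt: "set xs \<subseteq> G \<Longrightarrow> v \<in> wt lam \<Longrightarrow> word_op d xs v \<in> wt (lam + sum_list xs)"
proof (induction xs)
  case Nil then show ?case by simp
next
  case (Cons x xs)
  then have "d x (word_op d xs v) \<in> wt (lam + sum_list xs + x)" using d_wt by auto
  then show ?case by (simp add: algebra_simps)
qed

lemma sep_core:
  assumes "finite Lam" "mu \<notin> Lam" "b \<in> span (\<Union>lam\<in>Lam. wt lam)" "b \<in> wt mu"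
  shows "b = 0"
  using assms
proof (induction Lam arbitrary: b rule: finite_induct)
  case empty then show ?case by simp
next
  case (insert lam Lam)
  interpret l: Vector_Spaces.linear scale scale "d 0" using lin[OF G0] .
  define f where "f = (\<lambda>u. d 0 u - scale lam u)"
  have flin: "Vector_Spaces.linear scale scale f" unfolding f_def Vector_Spaces.linear_iff
    by (auto simp: vector_space_axioms l.add l.scale scale_right_diff_distrib scale_left_commute scale_right_distrib)
  interpret fl: Vector_Spaces.linear scale scale f by (rule flin)
  have "b \<in> span (wt lam \<union> (\<Union>lam\<in>Lam. wt lam))" using insert.prems by simp
  then obtain x y where xy: "b = x + y" "x \<in> span (wt lam)" "y \<in> span (\<Union>lam\<in>Lam. wt lam)"
    unfolding span_Un by blast
  have "x \<in> wt lam" using xy(2) wt_subspace by (metis span_eq_iff)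
  then have fx: "f x = 0" unfolding f_def weight_space_def by simp
  have fU: "f ` (\<Union>lam\<in>Lam. wt lam) \<subseteq> (\<Union>lam\<in>Lam. wt lam)"
  proof
    fix z assume "z \<in> f ` (\<Union>lam\<in>Lam. wt lam)"
    then obtain u l' where u: "z = f u" "l' \<in> Lam" "u \<in> wt l'" by auto
    then have "f u = scale (l' - lam) u" unfolding f_def weight_space_def by (simp add: scale_left_diff_distrib)
    then have "f u \<in> wt l'" using wt_subspace u(3) by (simp add: subspace_scale)
    then show "z \<in> (\<Union>lam\<in>Lam. wt lam)" using u by auto
  qed
  have "f y \<in> span (\<Union>lam\<in>Lam. wt lam)"
    using xy(3) fl.span_image[of "\<Union>lam\<in>Lam. wt lam"] span_mono[OF fU] by auto
  moreover have "f b = scale (mu - lam) b" using insert.prems(3) unfolding f_def weight_space_def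
    by (simp add: scale_left_diff_distrib)
  moreover have "f b = f y" using xy(1) fx fl.add by simp
  moreover have "scale (mu - lam) b \<in> wt mu" using insert.prems(3) wt_subspace by (simp add: subspace_scale)
  ultimately have "scale (mu - lam) b = 0" using insert.IH insert.prems(1) by (metis insert_iff)
  then show "b = 0" using insert.prems(1) by auto
qed

lemma weight_sep:
  assumes "finite T" "\<And>t. t \<in> T \<Longrightarrow> t \<in> wt (w t)" "b \<in> span T" "b \<in> wt mu"
  shows "b \<in> span {t\<in>T. w t = mu}"
proof -
  define T0 where "T0 = {t\<in>T. w t = mu}"
  define T1 where "T1 = {t\<in>T. w t \<noteq> mu}"
  have "T = T0 \<union> T1" unfolding T0_def T1_def by auto
  then have "b \<in> span (T0 \<union> T1)" using assms(3) by simp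
  then obtain x y where xy: "b = x + y" "x \<in> span T0" "y \<in> span T1"
    unfolding span_Un by blast
  have "T0 \<subseteq> wt mu" using assms(2) unfolding T0_def by auto
  then have "span T0 \<subseteq> wt mu" using wt_subspace by (intro span_minimal)
  then have "y \<in> wt mu" using xy assms(4) wt_subspace
    by (metis add_diff_cancel_left' subset_iff subspace_diff)
  moreover have "T1 \<subseteq> (\<Union>lam\<in>w ` T1. wt lam)" using assms(2) unfolding T1_def by auto
  then have "y \<in> span (\<Union>lam\<in>w ` T1. wt lam)" using xy(3) span_mono by blast
  moreover have "finite (w ` T1)" "mu \<notin> w ` T1" using assms(1) unfolding T1_def by auto
  ultimately have "y = 0" using sep_core by blast
  then show ?thesis using xy unfolding T0_def by simp
qed

lemma span_finite_sub: assumes "x \<in> span S" shows "\<exists>T. finite T \<and> T \<subseteq> S \<and> x \<in> span T"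
proof -
  obtain t r where tr: "x = (\<Sum>a\<in>t. scale (r a) a)" "finite t" "t \<subseteq> S"
    using assms unfolding span_explicit[of S] by blast
  have "x \<in> span t" unfolding tr(1) by (intro span_sum span_scale span_base)
  then show ?thesis using tr by blast
qed

end



context vmod begin

lemma word_zero: "set xs \<subseteq> G \<Longrightarrow> word_op d xs 0 = 0"
  using word_scale[of xs 0 0] by simp

lemma gen_univ:
  assumes "v \<in> A" "v \<noteq> 0"
  shows "span {word_op d xs u | xs u. set xs \<subseteq> G \<and> u \<in> A} = UNIV"
proof -
  define S where "S = {word_op d xs u | xs u. set xs \<subseteq> G \<and> u \<in> A}"
  have stab: "d x w \<in> span S" if x: "x \<in> G" and w: "w \<in> span S" for x w
  proof -
    interpret l: Vector_Spaces.linear scale scale "d x" using lin[OF x] .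
    have "d x ` S \<subseteq> S"
    proof
      fix z assume "z \<in> d x ` S"
      then obtain xs u where "z = d x (word_op d xs u)" "set xs \<subseteq> G" "u \<in> A" unfolding S_def by auto
      then show "z \<in> S" unfolding S_def using x by (intro CollectI exI[of _ "x#xs"] exI[of _ u]) auto
    qed
    then have "span (d x ` S) \<subseteq> span S" by (rule span_mono)
    moreover have "d x w \<in> span (d x ` S)" using l.span_image[of S] w by auto
    ultimately show ?thesis by auto
  qed
  have "v \<in> S" unfolding S_def using assms(1) by (intro CollectI exI[of _ "[]"] exI[of _ v]) auto
  then have "v \<in> span S" by (rule span_base)
  moreover have "span S = {0} \<or> span S = UNIV"
    using irr stab unfolding vir_irreducible_def by auto
  ultimately show ?thesis using assms(2) unfolding S_def by auto
qed

lemma G_irred: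
  assumes "w \<in> wt mu" "w \<noteq> 0" "v \<in> wt mu"
  shows "v \<in> span {word_op d xs w | xs. set xs \<subseteq> G \<and> sum_list xs = 0}"
proof -
  define S where "S = {word_op d xs u | xs u. set xs \<subseteq> G \<and> u \<in> {w}}"
  have "v \<in> span S" using gen_univ[of w "{w}"] assms(2) unfolding S_def by auto
  then obtain T where T: "finite T" "T \<subseteq> S" "v \<in> span T" using span_finite_sub by blast
  have "\<forall>t\<in>T. \<exists>xs. set xs \<subseteq> G \<and> t = word_op d xs w" using T(2) unfolding S_def by auto
  then obtain xf where xf: "\<And>t. t \<in> T \<Longrightarrow> set (xf t) \<subseteq> G \<and> t = word_op d (xf t) w" by metis
  have "v \<in> span {t\<in>T. mu + sum_list (xf t) = mu}"
  proof (rule weight_sep[OF T(1) _ T(3) assms(3)])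
    fix t assume "t \<in> T"
    then show "t \<in> wt (mu + sum_list (xf t))" using xf word_wt assms(1) by metis
  qed
  moreover have "{t\<in>T. mu + sum_list (xf t) = mu} \<subseteq> {word_op d xs w | xs. set xs \<subseteq> G \<and> sum_list xs = 0}"
    using xf by fastforce
  ultimately show ?thesis using span_mono by blast
qed

lemma finite_words:
  assumes "finite B" "span B = wt mu"
  shows "\<exists>WF. finite WF \<and> (\<forall>ys\<in>WF. set ys \<subseteq> G \<and> sum_list ys = 0) \<and>
     (\<forall>xs. set xs \<subseteq> G \<longrightarrow> sum_list xs = 0 \<longrightarrow>
        (\<forall>w\<in>wt mu. word_op d xs w \<in> span ((\<lambda>ys. word_op d ys w) ` WF)))"
proof -
  define sF where "sF = (\<lambda>a (f::'v\<Rightarrow>'v). \<lambda>u. scale a (f u))"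
  interpret F: vector_space sF
    by unfold_locales (auto simp: sF_def scale_right_distrib scale_left_distrib)
  define tup where "tup xs = (\<lambda>u. if u \<in> B then word_op d xs u else 0)" for xs
  define TT where "TT = {tup xs | xs. set xs \<subseteq> G \<and> sum_list xs = 0}"
  obtain BB where BB: "BB \<subseteq> TT" "F.independent BB" "TT \<subseteq> F.span BB"
    using F.maximal_independent_subset[of TT] by blast
  define dl where "dl (u::'v) (b::'v) = (\<lambda>u'::'v. if u' = u then b else (0::'v))" for u b
  define FF where "FF = (\<lambda>(u,b). dl u b) ` (B \<times> B)"
  have fFF: "finite FF" unfolding FF_def using assms(1) by simp
  have dlspan: "dl u z \<in> F.span (dl u ` B)" if "z \<in> span B" for u z
    using that
  proof (induction rule: span_induct_alt)
    case base
    have "dl u 0 = 0" unfolding dl_def by auto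
    then show ?case using F.span_zero[of "dl u ` B"] by metis
  next
    case (step c x y)
    have "dl u (scale c x + y) = sF c (dl u x) + dl u y" unfolding dl_def sF_def by auto
    moreover have "sF c (dl u x) \<in> F.span (dl u ` B)"
      using step(1) by (intro F.span_scale F.span_base) auto
    ultimately show ?case using step(2) F.span_add by metis
  qed
  have Bwt: "B \<subseteq> wt mu" using assms(2) span_superset by blast
  have "TT \<subseteq> F.span FF"
  proof
    fix t assume "t \<in> TT"
    then obtain xs where xs: "t = tup xs" "set xs \<subseteq> G" "sum_list xs = 0" unfolding TT_def by auto
    have "t = (\<Sum>u\<in>B. dl u (word_op d xs u))"
    proof
      fix u'
      have "(\<Sum>u\<in>B. dl u (word_op d xs u)) u' = (\<Sum>u\<in>B. if u' = u then word_op d xs u else 0)"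
        unfolding sum_fun_apply dl_def by simp
      also have "\<dots> = tup xs u'" unfolding tup_def using assms(1) by (simp add: sum.delta)
      finally show "t u' = (\<Sum>u\<in>B. dl u (word_op d xs u)) u'" using xs by simp
    qed
    moreover have "dl u (word_op d xs u) \<in> F.span FF" if "u \<in> B" for u
    proof -
      have "word_op d xs u \<in> wt (mu + 0)" using word_wt[OF xs(2)] Bwt that xs(3) by fastforce
      then have "word_op d xs u \<in> span B" using assms(2) by simp
      then have "dl u (word_op d xs u) \<in> F.span (dl u ` B)" by (rule dlspan)
      moreover have "dl u ` B \<subseteq> FF" unfolding FF_def using that by auto
      ultimately show ?thesis using F.span_mono by blast
    qed
    ultimately show "t \<in> F.span FF" by (auto intro!: F.span_sum)
  qed
  then have fBB: "finite BB" using F.independent_span_bound[OF fFF BB(2)] BB(1) by blast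
  have "\<forall>t\<in>BB. \<exists>ys. set ys \<subseteq> G \<and> sum_list ys = 0 \<and> t = tup ys" using BB(1) unfolding TT_def by auto
  then obtain xf where xf: "\<And>t. t \<in> BB \<Longrightarrow> set (xf t) \<subseteq> G \<and> sum_list (xf t) = 0 \<and> t = tup (xf t)" by metis
  define WF where "WF = xf ` BB"
  have "word_op d xs w \<in> span ((\<lambda>ys. word_op d ys w) ` WF)"
    if xs: "set xs \<subseteq> G" "sum_list xs = 0" and w: "w \<in> wt mu" for xs w
  proof -
    have "tup xs \<in> F.span BB" using BB(3) xs unfolding TT_def by auto
    then obtain c where c: "tup xs = (\<Sum>t\<in>BB. sF (c t) t)" unfolding F.span_finite[OF fBB] by auto
    define g where "g w = (\<Sum>t\<in>BB. scale (c t) (word_op d (xf t) w))" for w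
    have onB: "word_op d xs u = g u" if "u \<in> B" for u
    proof -
      have "word_op d xs u = tup xs u" unfolding tup_def using that by simp
      also have "\<dots> = (\<Sum>t\<in>BB. scale (c t) (t u))" unfolding c sum_fun_apply sF_def by simp
      also have "\<dots> = g u" unfolding g_def
      proof (rule sum.cong[OF refl])
        fix t assume "t \<in> BB"
        then have "t u = tup (xf t) u" using xf by metis
        then show "scale (c t) (t u) = scale (c t) (word_op d (xf t) u)" using \<open>u \<in> B\<close> by (simp add: tup_def)
      qed
      finally show ?thesis .
    qed
    have "w \<in> span B" using w assms(2) by simp
    then have "word_op d xs w = g w"
    proof (induction rule: span_induct_alt)
      case base
      then show ?case unfolding g_def using word_zero xs xf by simp
    next
      case (step a x y)
      have "g (scale a x + y) = scale a (g x) + g y"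
        unfolding g_def using xf
        by (simp add: word_add word_scale scale_right_distrib sum.distrib scale_sum_right scale_left_commute mult.commute)
      then show ?case using step onB word_add[OF xs(1)] word_scale[OF xs(1)] by simp
    qed
    also have "g w \<in> span ((\<lambda>ys. word_op d ys w) ` WF)"
      unfolding g_def WF_def by (intro span_sum span_scale span_base) auto
    finally show ?thesis .
  qed
  moreover have "finite WF" unfolding WF_def using fBB by simp
  moreover have "\<forall>ys\<in>WF. set ys \<subseteq> G \<and> sum_list ys = 0" unfolding WF_def using xf by auto
  ultimately show ?thesis by blast
qed

end



context vmod begin

lemma U0_irred:
  assumes WF: "\<forall>ys\<in>WF. set ys \<subseteq> G \<and> sum_list ys = 0"
    "\<forall>xs. set xs \<subseteq> G \<longrightarrow> sum_list xs = 0 \<longrightarrow>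
        (\<forall>w\<in>wt mu. word_op d xs w \<in> span ((\<lambda>ys. word_op d ys w) ` WF))"
    and H: "\<Union>(set ` WF) \<subseteq> H" and ne: "wt mu \<noteq> {0}"
  shows "U0_irreducible scale d H mu"
  unfolding U0_irreducible_def
proof (intro conjI ne allI impI)
  fix W assume W: "subspace W" "W \<subseteq> wt mu"
    and st: "\<forall>xs. set xs \<subseteq> H \<longrightarrow> sum_list xs = 0 \<longrightarrow> (\<forall>w\<in>W. word_op d xs w \<in> W)"
  show "W = {0} \<or> W = wt mu"
  proof (cases "W = {0}")
    case False
    then obtain w where w: "w \<in> W" "w \<noteq> 0" using subspace_0[OF W(1)] by blast
    have "wt mu \<subseteq> W"
    proof
      fix v assume v: "v \<in> wt mu"
      have sub1: "(\<lambda>ys. word_op d ys w) ` WF \<subseteq> W"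
      proof
        fix z assume "z \<in> (\<lambda>ys. word_op d ys w) ` WF"
        then obtain ys where "ys \<in> WF" "z = word_op d ys w" by auto
        then show "z \<in> W" using st WF(1) H w(1) by blast
      qed
      have "{word_op d xs w | xs. set xs \<subseteq> G \<and> sum_list xs = 0} \<subseteq> W"
      proof
        fix z assume "z \<in> {word_op d xs w | xs. set xs \<subseteq> G \<and> sum_list xs = 0}"
        then obtain xs where "set xs \<subseteq> G" "sum_list xs = 0" "z = word_op d xs w" by auto
        then have "z \<in> span ((\<lambda>ys. word_op d ys w) ` WF)" using WF(2) w W(2) by blast
        then show "z \<in> W" using span_minimal[OF sub1 W(1)] by blast
      qed
      then have "span {word_op d xs w | xs. set xs \<subseteq> G \<and> sum_list xs = 0} \<subseteq> W"
        using span_minimal W(1) by blast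
      then show "v \<in> W" using G_irred[OF _ w(2) v] w(1) W(2) by blast
    qed
    then show ?thesis using W(2) by blast
  qed simp
qed

lemma pair_fin:
  assumes ne: "wt mu \<noteq> {0}" "wt mu' \<noteq> {0}" and B': "finite B'" "span B' = wt mu'"
  shows "\<exists>L. finite L \<and> L \<subseteq> G \<and> mu - mu' \<in> G \<and>
     (\<forall>H. L \<subseteq> H \<longrightarrow> H \<subseteq> G \<longrightarrow> U_apply scale d H mu' \<subseteq> U_apply scale d H mu)"
proof -
  obtain v where v: "v \<in> wt mu" "v \<noteq> 0" using ne(1) subspace_0[OF wt_subspace] by blast
  define S where "S = {word_op d xs u | xs u. set xs \<subseteq> G \<and> u \<in> wt mu}"
  have SU: "span S = UNIV" unfolding S_def by (rule gen_univ[OF v])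
  have "\<forall>b\<in>B'. \<exists>T. finite T \<and> T \<subseteq> S \<and> b \<in> span T"
  proof
    fix b assume "b \<in> B'"
    have "b \<in> span S" using SU by simp
    from span_finite_sub[OF this] show "\<exists>T. finite T \<and> T \<subseteq> S \<and> b \<in> span T" .
  qed
  then obtain Tf where Tf: "\<And>b. b \<in> B' \<Longrightarrow> finite (Tf b) \<and> Tf b \<subseteq> S \<and> b \<in> span (Tf b)" by metis
  define P where "P = (\<Union>b\<in>B'. Tf b)"
  have fP: "finite P" "P \<subseteq> S" unfolding P_def using Tf B'(1) by auto
  have "\<forall>t\<in>P. \<exists>xs u. set xs \<subseteq> G \<and> u \<in> wt mu \<and> t = word_op d xs u" using fP(2) unfolding S_def by blast
  then obtain xf uf where xf: "\<And>t. t \<in> P \<Longrightarrow> set (xf t) \<subseteq> G \<and> uf t \<in> wt mu \<and> t = word_op d (xf t) (uf t)"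
    by metis
  define L where "L = (\<Union>t\<in>P. set (xf t))"
  have fL: "finite L" "L \<subseteq> G" unfolding L_def using fP(1) xf by auto
  have incl: "U_apply scale d H mu' \<subseteq> U_apply scale d H mu" if H: "L \<subseteq> H" "H \<subseteq> G" for H
  proof -
    define gen where "gen = {word_op d xs u | xs u. set xs \<subseteq> H \<and> u \<in> weight_space scale d mu}"
    have Ug: "U_apply scale d H mu = span gen" unfolding U_apply_def gen_def by simp
    have "P \<subseteq> gen"
    proof
      fix t assume t: "t \<in> P"
      have "set (xf t) \<subseteq> H" using t H(1) unfolding L_def by auto
      then show "t \<in> gen" unfolding gen_def using xf[OF t] by blast
    qed
    have "B' \<subseteq> span gen"
    proof
      fix b assume b: "b \<in> B'"
      then have "Tf b \<subseteq> gen" using \<open>P \<subseteq> gen\<close> unfolding P_def by auto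
      then show "b \<in> span gen" using Tf[OF b] span_mono by blast
    qed
    then have "span B' \<subseteq> span gen" by (rule span_minimal[OF _ subspace_span])
    then have wt': "wt mu' \<subseteq> span gen" using B'(2) by simp
    have "{word_op d xs u | xs u. set xs \<subseteq> H \<and> u \<in> weight_space scale d mu'} \<subseteq> span gen"
    proof
      fix z assume "z \<in> {word_op d xs u | xs u. set xs \<subseteq> H \<and> u \<in> weight_space scale d mu'}"
      then obtain xs u where z: "z = word_op d xs u" "set xs \<subseteq> H" "u \<in> wt mu'" by auto
      have xsG: "set xs \<subseteq> G" using z(2) H(2) by auto
      interpret l: Vector_Spaces.linear scale scale "word_op d xs" using word_lin[OF xsG] .
      have "word_op d xs ` gen \<subseteq> gen"
      proof
        fix y assume "y \<in> word_op d xs ` gen"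
        then obtain ys u' where "y = word_op d xs (word_op d ys u')" "set ys \<subseteq> H" "u' \<in> wt mu"
          unfolding gen_def by auto
        then show "y \<in> gen" unfolding gen_def using z(2)
          by (intro CollectI exI[of _ "xs @ ys"] exI[of _ u']) (auto simp: word_append)
      qed
      moreover have "z \<in> span (word_op d xs ` gen)" using l.span_image[of gen] wt' z by auto
      ultimately show "z \<in> span gen" using span_mono by blast
    qed
    then have "span {word_op d xs u | xs u. set xs \<subseteq> H \<and> u \<in> weight_space scale d mu'} \<subseteq> span gen"
      by (rule span_minimal[OF _ subspace_span])
    then show ?thesis unfolding Ug by (simp add: U_apply_def)
  qed
  have "mu' - mu \<in> G"
  proof (rule ccontr)
    assume nG: "mu' - mu \<notin> G"
    obtain b where b: "b \<in> wt mu'" "b \<noteq> 0" using ne(2) subspace_0[OF wt_subspace] by blast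
    have "b \<in> span S" using SU by simp
    from span_finite_sub[OF this] obtain T where T: "finite T" "T \<subseteq> S" "b \<in> span T" by blast
    have "\<forall>t\<in>T. \<exists>xs u. set xs \<subseteq> G \<and> u \<in> wt mu \<and> t = word_op d xs u" using T(2) unfolding S_def by blast
    then obtain xg ug where xg: "\<And>t. t \<in> T \<Longrightarrow> set (xg t) \<subseteq> G \<and> ug t \<in> wt mu \<and> t = word_op d (xg t) (ug t)"
      by metis
    have "b \<in> span {t\<in>T. mu + sum_list (xg t) = mu'}"
    proof (rule weight_sep[OF T(1) _ T(3) b(1)])
      fix t assume "t \<in> T"
      then have "set (xg t) \<subseteq> G" "ug t \<in> wt mu" "t = word_op d (xg t) (ug t)" using xg[of t] by blast+
      then show "t \<in> wt (mu + sum_list (xg t))" using word_wt[of "xg t" "ug t" mu] by metis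
    qed
    moreover have "{t\<in>T. mu + sum_list (xg t) = mu'} = {}"
    proof -
      have "mu + sum_list (xg t) \<noteq> mu'" if "t \<in> T" for t
      proof
        assume "mu + sum_list (xg t) = mu'"
        then have "mu' - mu = sum_list (xg t)" by (metis add_diff_cancel_left')
        moreover have "sum_list (xg t) \<in> G" using sum_list_sub[OF Gsub] xg[OF that] by blast
        ultimately show False using nG by simp
      qed
      then show ?thesis by auto
    qed
    ultimately show False using b(2) by simp
  qed
  then have "- (mu' - mu) \<in> G" using Gsub unfolding add_subgroup_def by blast
  then have "mu - mu' \<in> G" by simp
  then show ?thesis using fL incl by blast
qed

end



theorem lemma3p1:
  fixes G :: "complex set" and scale :: "complex \<Rightarrow> 'v::ab_group_add \<Rightarrow> 'v"
    and d :: "complex \<Rightarrow> 'v \<Rightarrow> 'v" and c :: complex and I :: "complex set"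
  assumes "add_subgroup G"
    and "rank_ge G 2"
    and "vir_module G scale d c"
    and "harish_chandra scale d"
    and "vir_irreducible G scale d"
    and "\<not> vir_trivial G scale d c"
    and "finite I" and "I \<subseteq> supp scale d"
  shows "\<exists>GI. GI \<subseteq> G \<and> (\<exists>k\<ge>1. iso_Zk GI k) \<and>
           (\<forall>\<mu>\<in>I. \<forall>\<mu>'\<in>I. U_apply scale d GI \<mu> = U_apply scale d GI \<mu>' \<and> \<mu> - \<mu>' \<in> GI) \<and>
           (\<forall>\<mu>\<in>I. U0_irreducible scale d GI \<mu>)"
proof -
  have vs: "vector_space scale" and linG: "\<forall>x\<in>G. Vector_Spaces.linear scale scale (d x)"
    and rel: "\<forall>x\<in>G. \<forall>y\<in>G. \<forall>v. d x (d y v) - d y (d x v) =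
        scale (y - x) (d (x + y) v) + (if x = - y then scale ((x ^ 3 - x) / 12 * c) v else 0)"
    using assms(3) unfolding vir_module_def by auto
  interpret vsp: vector_space scale by (rule vs)
  have G0: "0 \<in> G" using assms(1) unfolding add_subgroup_def by auto
  have comm: "d 0 (d y v) - d y (d 0 v) = scale y (d y v)" if "y \<in> G" for y v
    using rel G0 that by (auto simp: vsp.scale_zero_left)
  have "vmod scale G d"
    by (rule vmod.intro[OF vs]) (unfold vmod_axioms_def, use assms(1,5) linG comm in blast)
  then interpret vmod scale G d .
  obtain gg where gg: "\<forall>i<(2::nat). gg i \<in> G \<and> gg i \<noteq> 0" using assms(2) unfolding rank_ge_def by blast
  define g0 where "g0 = gg 0"
  have g0: "g0 \<in> G" "g0 \<noteq> 0" using gg unfolding g0_def by auto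
  have hc: "\<forall>lam. \<exists>B. finite B \<and> B \<subseteq> wt lam \<and> module.span scale B = wt lam"
    using assms(4) unfolding harish_chandra_def by blast
  have ne: "wt mu \<noteq> {0}" if "mu \<in> I" for mu
    using assms(8) that unfolding supp_def by auto
  have "\<forall>mu\<in>I. \<exists>WF. finite WF \<and> (\<forall>ys\<in>WF. set ys \<subseteq> G \<and> sum_list ys = 0) \<and>
     (\<forall>xs. set xs \<subseteq> G \<longrightarrow> sum_list xs = 0 \<longrightarrow>
        (\<forall>w\<in>wt mu. word_op d xs w \<in> module.span scale ((\<lambda>ys. word_op d ys w) ` WF)))"
  proof
    fix mu assume "mu \<in> I"
    obtain B where "finite B" "module.span scale B = wt mu" using hc by blast
    then show "\<exists>WF. finite WF \<and> (\<forall>ys\<in>WF. set ys \<subseteq> G \<and> sum_list ys = 0) \<and>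
     (\<forall>xs. set xs \<subseteq> G \<longrightarrow> sum_list xs = 0 \<longrightarrow>
        (\<forall>w\<in>wt mu. word_op d xs w \<in> module.span scale ((\<lambda>ys. word_op d ys w) ` WF)))"
      by (rule finite_words)
  qed
  then obtain WFf where WFf: "\<And>mu. mu \<in> I \<Longrightarrow> finite (WFf mu) \<and> (\<forall>ys\<in>WFf mu. set ys \<subseteq> G \<and> sum_list ys = 0) \<and>
     (\<forall>xs. set xs \<subseteq> G \<longrightarrow> sum_list xs = 0 \<longrightarrow>
        (\<forall>w\<in>wt mu. word_op d xs w \<in> module.span scale ((\<lambda>ys. word_op d ys w) ` WFf mu)))"
    by metis
  have "\<forall>p\<in>I \<times> I. \<exists>L. finite L \<and> L \<subseteq> G \<and> fst p - snd p \<in> G \<and>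
     (\<forall>H. L \<subseteq> H \<longrightarrow> H \<subseteq> G \<longrightarrow> U_apply scale d H (snd p) \<subseteq> U_apply scale d H (fst p))"
  proof
    fix p assume p: "p \<in> I \<times> I"
    obtain B where "finite B" "module.span scale B = wt (snd p)" using hc by blast
    then show "\<exists>L. finite L \<and> L \<subseteq> G \<and> fst p - snd p \<in> G \<and>
     (\<forall>H. L \<subseteq> H \<longrightarrow> H \<subseteq> G \<longrightarrow> U_apply scale d H (snd p) \<subseteq> U_apply scale d H (fst p))"
      using pair_fin[of "fst p" "snd p" B] ne p by auto
  qed
  then obtain Lf where Lf: "\<And>p. p \<in> I \<times> I \<Longrightarrow> finite (Lf p) \<and> Lf p \<subseteq> G \<and> fst p - snd p \<in> G \<and>
     (\<forall>H. Lf p \<subseteq> H \<longrightarrow> H \<subseteq> G \<longrightarrow> U_apply scale d H (snd p) \<subseteq> U_apply scale d H (fst p))"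
    by metis
  define L where "L = insert g0 ((\<Union>mu\<in>I. \<Union>(set ` WFf mu)) \<union> (\<Union>p\<in>I \<times> I. Lf p \<union> {fst p - snd p}))"
  have fA: "finite (\<Union>mu\<in>I. \<Union>(set ` WFf mu))"
  proof (rule finite_UN_I[OF assms(7)])
    fix mu assume "mu \<in> I"
    then have "finite (WFf mu)" using WFf by blast
    then show "finite (\<Union>(set ` WFf mu))" by simp
  qed
  have fB: "finite (\<Union>p\<in>I \<times> I. Lf p \<union> {fst p - snd p})"
  proof (rule finite_UN_I)
    show "finite (I \<times> I)" using assms(7) by simp
  next
    fix p assume "p \<in> I \<times> I"
    then show "finite (Lf p \<union> {fst p - snd p})" using Lf by blast
  qed
  have finL: "finite L" unfolding L_def using fA fB by simp
  have LA: "\<Union>(set ` WFf mu) \<subseteq> G" if "mu \<in> I" for mu using WFf[OF that] by blast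
  have LB: "Lf p \<union> {fst p - snd p} \<subseteq> G" if "p \<in> I \<times> I" for p using Lf[OF that] by blast
  have LG: "L \<subseteq> G" unfolding L_def using g0(1) LA LB by blast
  define GI where "GI = zsp L"
  have GIG: "GI \<subseteq> G" unfolding GI_def by (rule zsp_least[OF assms(1) LG])
  have LGI: "L \<subseteq> GI" unfolding GI_def by (auto intro: zsp_base)
  have "\<exists>k\<ge>1. iso_Zk GI k" unfolding GI_def by (rule zsp_free[OF finL _ g0(2)]) (simp add: L_def)
  moreover have "U_apply scale d GI mu = U_apply scale d GI mu' \<and> mu - mu' \<in> GI"
    if "mu \<in> I" "mu' \<in> I" for mu mu'
  proof -
    have p1: "(mu, mu') \<in> I \<times> I" "(mu', mu) \<in> I \<times> I" using that by auto
    have s1: "Lf (mu, mu') \<subseteq> L" "Lf (mu', mu) \<subseteq> L" using p1 unfolding L_def by blast+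
    have "U_apply scale d GI (snd (mu, mu')) \<subseteq> U_apply scale d GI (fst (mu, mu'))"
      using Lf[OF p1(1)] s1(1) LGI GIG by blast
    moreover have "U_apply scale d GI (snd (mu', mu)) \<subseteq> U_apply scale d GI (fst (mu', mu))"
      using Lf[OF p1(2)] s1(2) LGI GIG by blast
    moreover have "fst (mu, mu') - snd (mu, mu') \<in> L" using p1 unfolding L_def by blast
    then have "mu - mu' \<in> GI" using LGI by auto
    ultimately show ?thesis by auto
  qed
  moreover have "U0_irreducible scale d GI mu" if "mu \<in> I" for mu
  proof (rule U0_irred)
    show "\<forall>ys\<in>WFf mu. set ys \<subseteq> G \<and> sum_list ys = 0" using WFf[OF that] by blast
    show "\<forall>xs. set xs \<subseteq> G \<longrightarrow> sum_list xs = 0 \<longrightarrow>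
        (\<forall>w\<in>wt mu. word_op d xs w \<in> module.span scale ((\<lambda>ys. word_op d ys w) ` WFf mu))" using WFf[OF that] by blast
    show "\<Union>(set ` WFf mu) \<subseteq> GI" using LGI that unfolding L_def by blast
    show "wt mu \<noteq> {0}" using ne[OF that] .
  qed
  ultimately show ?thesis using GIG by blast
qed



end
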